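(* Let $A,B\in M_n(\mathbb{R}_+)$ be simultaneously triangularizable. Then their characteristic polynomial $P_{A,B}(z)$ is a product of $n$ linear factors, i.e. there exist $\alpha_i,\beta_i\ge 0$ ($i=1,\dots,n$) with $P_{A,B}(z)=\prod_{i=1}^n(1\oplus\alpha_i z_1\oplus\beta_i z_2)$ for all $z_1,z_2\ge0$.
   Context: Max algebra: $\mathbb{R}_+$ the nonnegative reals with $a\oplus b=\max\{a,b\}$ and ordinary multiplication; for matrices, $(AB)_{ij}=\max_k a_{ik}b_{kj}$ and $(A\oplus B)_{ij}=\max\{a_{ij},b_{ij}\}$. $GL_n(\mathbb{R}_+)$ is the set of matrices invertible under this product (the generalized permutation matrices); $A,B$ are simultaneously triangularizable if one $P\in GL_n(\mathbb{R}_+)$ makes both $P^{-1}AP$ and $P^{-1}BP$ upper triangular. The tropical determinant of $M=(m_{ij})$ is $\mathrm{tdet}(M)=\max_{\sigma\in S_n}\prod_{i=1}^n m_{i\sigma(i)}$. For $z=(z_1,z_2)$ with $z_1,z_2\ge0$, let $M(z)=I\oplus(z_1A)\oplus(z_2B)$, where $I$ is the identity matrix ($1$ on the diagonal, $0$ elsewhere); the characteristic polynomial of the pair is $P_{A,B}(z)=\mathrm{tdet}(M(z))$. *)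

theory Defs
  imports "HOL-Analysis.Analysis" "HOL-Combinatorics.Permutations"
begin

text \<open>Square n x n matrices over the max algebra R_+ are represented as functions
  nat => nat => real; only entries with indices < n are relevant.\<close>

type_synonym mat = "nat \<Rightarrow> nat \<Rightarrow> real"

definition nonneg_mat :: "nat \<Rightarrow> mat \<Rightarrow> bool" where
  "nonneg_mat n A \<longleftrightarrow> (\<forall>i<n. \<forall>j<n. A i j \<ge> 0)"

definition maxmult :: "nat \<Rightarrow> mat \<Rightarrow> mat \<Rightarrow> mat" where
  "maxmult n A B = (\<lambda>i j. if i < n \<and> j < n then Max ((\<lambda>k. A i k * B k j) ` {0..<n}) else 0)"

definition maxadd :: "mat \<Rightarrow> mat \<Rightarrow> mat" where
  "maxadd A B = (\<lambda>i j. max (A i j) (B i j))"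

definition scal :: "real \<Rightarrow> mat \<Rightarrow> mat" where
  "scal c A = (\<lambda>i j. c * A i j)"

definition idm :: "nat \<Rightarrow> mat" where
  "idm n = (\<lambda>i j. if i < n \<and> j < n \<and> i = j then 1 else 0)"

definition restr :: "nat \<Rightarrow> mat \<Rightarrow> mat" where
  "restr n A = (\<lambda>i j. if i < n \<and> j < n then A i j else 0)"

definition maxGL :: "nat \<Rightarrow> mat \<Rightarrow> bool" where
  "maxGL n P \<longleftrightarrow> nonneg_mat n P \<and>
     (\<exists>Q. nonneg_mat n Q \<and> maxmult n P Q = idm n \<and> maxmult n Q P = idm n)"

definition upper_tri :: "nat \<Rightarrow> mat \<Rightarrow> bool" where
  "upper_tri n A \<longleftrightarrow> (\<forall>i<n. \<forall>j<n. j < i \<longrightarrow> A i j = 0)"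

definition simul_triang :: "nat \<Rightarrow> mat \<Rightarrow> mat \<Rightarrow> bool" where
  "simul_triang n A B \<longleftrightarrow>
     (\<exists>P Q. nonneg_mat n P \<and> nonneg_mat n Q \<and>
        maxmult n P Q = idm n \<and> maxmult n Q P = idm n \<and>
        upper_tri n (maxmult n (maxmult n Q A) P) \<and>
        upper_tri n (maxmult n (maxmult n Q B) P))"

definition tdet :: "nat \<Rightarrow> mat \<Rightarrow> real" where
  "tdet n M = Max ((\<lambda>\<sigma>. \<Prod>i<n. M i (\<sigma> i)) ` {\<sigma>. \<sigma> permutes {..<n}})"

definition charpoly2 :: "nat \<Rightarrow> mat \<Rightarrow> mat \<Rightarrow> real \<Rightarrow> real \<Rightarrow> real" where
  "charpoly2 n A B z1 z2 = tdet n (maxadd (idm n) (maxadd (scal z1 A) (scal z2 B)))"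

end

theory Submission
  imports Defs
begin

lemma exists_descent:
  fixes f :: "'a \<Rightarrow> nat"
  assumes p: "\<tau> permutes S" and fin: "finite S" and inj: "inj_on f S" and ex: "\<exists>a\<in>S. \<tau> a \<noteq> a"
  shows "\<exists>a\<in>S. \<tau> a \<noteq> a \<and> f (\<tau> a) < f a"
proof -
  define M where "M = {a\<in>S. \<tau> a \<noteq> a}"
  have fM: "finite M" "M \<noteq> {}" using fin ex by (auto simp: M_def)
  then have "Max (f ` M) \<in> f ` M" by simp
  then obtain a where aM: "a \<in> M" and fa: "f a = Max (f ` M)" by auto
  have aS: "a \<in> S" and ta: "\<tau> a \<noteq> a" using aM by (auto simp: M_def)
  have taS: "\<tau> a \<in> S" using p aS by (simp add: permutes_in_image)
  have "\<tau> (\<tau> a) \<noteq> \<tau> a"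
    using ta permutes_inj[OF p] by (metis injD)
  then have "\<tau> a \<in> M" using taS by (simp add: M_def)
  then have "f (\<tau> a) \<le> f a" using fa fM by simp
  moreover have "f (\<tau> a) \<noteq> f a" using inj taS aS ta by (metis inj_on_def)
  ultimately show ?thesis using aS ta by auto
qed

lemma maxmult_ge:
  assumes "i < n" "j < n" "k < n"
  shows "maxmult n X Y i j \<ge> X i k * Y k j"
  using assms unfolding maxmult_def by (auto intro: Max_ge)

lemma maxmult_nonneg:
  assumes "nonneg_mat n X" "nonneg_mat n Y"
  shows "maxmult n X Y i j \<ge> 0"
proof (cases "i < n \<and> j < n")
  case True
  then have "maxmult n X Y i j \<ge> X i 0 * Y 0 j" by (intro maxmult_ge) auto
  moreover have "X i 0 * Y 0 j \<ge> 0" using assms True unfolding nonneg_mat_def by auto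
  ultimately show ?thesis by linarith
qed (auto simp: maxmult_def)

lemma conj_lower:
  assumes nQ: "nonneg_mat n Q" and nA: "nonneg_mat n A" and nP: "nonneg_mat n P"
    and i: "i < n" and j: "j < n" and k: "k < n" and l: "l < n"
  shows "maxmult n (maxmult n Q A) P i j \<ge> Q i k * A k l * P l j"
proof -
  have "maxmult n (maxmult n Q A) P i j \<ge> maxmult n Q A i l * P l j"
    using i j l by (rule maxmult_ge)
  moreover have "maxmult n Q A i l \<ge> Q i k * A k l" using i l k by (rule maxmult_ge)
  moreover have "P l j \<ge> 0" using nP l j unfolding nonneg_mat_def by auto
  ultimately show ?thesis by (meson mult_right_mono order_trans)
qed

lemma entry_zero:
  assumes nQ: "nonneg_mat n Q" and nA: "nonneg_mat n A" and nP: "nonneg_mat n P"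
    and ut: "upper_tri n (maxmult n (maxmult n Q A) P)"
    and a: "a < n" and b: "b < n" and pa: "\<pi> a < n" and pb: "\<pi> b < n" and lt: "\<pi> b < \<pi> a"
    and q: "Q (\<pi> a) a > 0" and p: "P b (\<pi> b) > 0"
  shows "A a b = 0"
proof -
  have "maxmult n (maxmult n Q A) P (\<pi> a) (\<pi> b) = 0" using ut pa pb lt unfolding upper_tri_def by auto
  moreover have "maxmult n (maxmult n Q A) P (\<pi> a) (\<pi> b) \<ge> Q (\<pi> a) a * A a b * P b (\<pi> b)"
    using conj_lower[OF nQ nA nP pa pb a b] .
  ultimately have "Q (\<pi> a) a * A a b * P b (\<pi> b) \<le> 0" by linarith
  moreover have "A a b \<ge> 0" using nA a b unfolding nonneg_mat_def by auto
  ultimately show ?thesis using q p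
    by (metis mult_pos_pos order_antisym_conv zero_less_mult_pos2 mult.commute linorder_not_le mult_eq_0_iff order_le_less)
qed

theorem theorem3p20:
  fixes n :: nat and A B :: mat
  assumes "nonneg_mat n A" and "nonneg_mat n B"
    and "simul_triang n A B"
  shows "\<exists>\<alpha> \<beta> :: nat \<Rightarrow> real. (\<forall>i<n. \<alpha> i \<ge> 0 \<and> \<beta> i \<ge> 0) \<and>
           (\<forall>z1 z2. z1 \<ge> 0 \<longrightarrow> z2 \<ge> 0 \<longrightarrow>
              charpoly2 n A B z1 z2 = (\<Prod>i<n. max 1 (max (\<alpha> i * z1) (\<beta> i * z2))))"
proof -
  note nA = assms(1) and nB = assms(2)
  obtain P Q where nP: "nonneg_mat n P" and nQ: "nonneg_mat n Q"
    and PQ: "maxmult n P Q = idm n"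
    and utA: "upper_tri n (maxmult n (maxmult n Q A) P)"
    and utB: "upper_tri n (maxmult n (maxmult n Q B) P)"
    using assms(3) unfolding simul_triang_def by blast
  have exk: "\<exists>k<n. P i k > 0 \<and> Q k i > 0" if i: "i < n" for i
  proof -
    have fin: "finite ((\<lambda>k. P i k * Q k i) ` {0..<n})" "(\<lambda>k. P i k * Q k i) ` {0..<n} \<noteq> {}"
      using i by auto
    have "maxmult n P Q i i = 1" using PQ i by (simp add: idm_def)
    then have "Max ((\<lambda>k. P i k * Q k i) ` {0..<n}) = 1" using i by (simp add: maxmult_def)
    then have "1 \<in> (\<lambda>k. P i k * Q k i) ` {0..<n}" using Max_in[OF fin] by metis
    then obtain k where k: "k < n" and e: "P i k * Q k i = 1" by auto
    have "P i k \<ge> 0" "Q k i \<ge> 0" using nP nQ i k unfolding nonneg_mat_def by auto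
    then have "P i k > 0 \<and> Q k i > 0" using e
      by (metis less_eq_real_def mult_zero_left mult_zero_right zero_neq_one)
    then show ?thesis using k by blast
  qed
  define \<pi> where "\<pi> i = (SOME k. k < n \<and> P i k > 0 \<and> Q k i > 0)" for i
  have \<pi>: "\<pi> i < n \<and> P i (\<pi> i) > 0 \<and> Q (\<pi> i) i > 0" if "i < n" for i
    unfolding \<pi>_def using someI_ex[OF exk[OF that]] by blast
  have inj: "inj_on \<pi> {..<n}"
  proof (rule inj_onI, rule ccontr)
    fix i j assume i: "i \<in> {..<n}" and j: "j \<in> {..<n}" and e: "\<pi> i = \<pi> j" and ne: "i \<noteq> j"
    have "maxmult n P Q i j \<ge> P i (\<pi> i) * Q (\<pi> i) j" using i j \<pi>[of i] by (intro maxmult_ge) auto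
    moreover have "P i (\<pi> i) * Q (\<pi> i) j > 0" using \<pi>[of i] \<pi>[of j] e i j by auto
    moreover have "maxmult n P Q i j = 0" using PQ ne i j by (simp add: idm_def)
    ultimately show False by linarith
  qed
  have zA: "A a b = 0" and zB: "B a b = 0" if "a < n" "b < n" "\<pi> b < \<pi> a" for a b
    using entry_zero[OF nQ nA nP utA that(1,2) _ _ that(3)] entry_zero[OF nQ nB nP utB that(1,2) _ _ that(3)]
      \<pi>[OF that(1)] \<pi>[OF that(2)] by auto
  have nonn: "\<forall>i<n. A i i \<ge> 0 \<and> B i i \<ge> 0" using nA nB unfolding nonneg_mat_def by auto
  have main: "\<forall>z1 z2. z1 \<ge> 0 \<longrightarrow> z2 \<ge> 0 \<longrightarrow> charpoly2 n A B z1 z2 = (\<Prod>i<n. max 1 (max (A i i * z1) (B i i * z2)))"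
  proof (intro allI impI)
    fix z1 z2 :: real assume z1: "z1 \<ge> 0" and z2: "z2 \<ge> 0"
    define N where "N = maxadd (idm n) (maxadd (scal z1 A) (scal z2 B))"
    have Nnn: "N i j \<ge> 0" if "i < n" "j < n" for i j
      unfolding N_def maxadd_def idm_def by auto
    have Ndiag: "N i i = max 1 (max (A i i * z1) (B i i * z2))" if "i < n" for i
      using that unfolding N_def maxadd_def idm_def scal_def by (simp add: mult.commute)
    have bound: "(\<Prod>i<n. N i (\<tau> i)) \<le> (\<Prod>i<n. N i i)" if t: "\<tau> permutes {..<n}" for \<tau>
    proof (cases "\<exists>a\<in>{..<n}. \<tau> a \<noteq> a")
      case True
      obtain a where a: "a < n" and ta: "\<tau> a \<noteq> a" and lt: "\<pi> (\<tau> a) < \<pi> a"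
        using exists_descent[OF t _ inj True] by auto
      have tan: "\<tau> a < n" using permutes_in_image[OF t, of a] a by simp
      have "N a (\<tau> a) = 0"
        using zA[OF a tan lt] zB[OF a tan lt] ta a tan
        unfolding N_def maxadd_def idm_def scal_def by simp
      then have "(\<Prod>i<n. N i (\<tau> i)) = 0" using a by (intro prod_zero) auto
      moreover have "(\<Prod>i<n. N i i) \<ge> 0" by (intro prod_nonneg) (auto intro: Nnn)
      ultimately show ?thesis by linarith
    next
      case False
      then have "(\<Prod>i<n. N i (\<tau> i)) = (\<Prod>i<n. N i i)" by (intro prod.cong) auto
      then show ?thesis by simp
    qed
    have "tdet n N = (\<Prod>i<n. N i i)"
      unfolding tdet_def
    proof (rule Max_eqI)
      show "finite ((\<lambda>\<sigma>. \<Prod>i<n. N i (\<sigma> i)) ` {\<sigma>. \<sigma> permutes {..<n}})"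
        by (intro finite_imageI finite_permutations) auto
      show "y \<le> (\<Prod>i<n. N i i)" if "y \<in> (\<lambda>\<sigma>. \<Prod>i<n. N i (\<sigma> i)) ` {\<sigma>. \<sigma> permutes {..<n}}" for y
        using that bound by auto
      show "(\<Prod>i<n. N i i) \<in> (\<lambda>\<sigma>. \<Prod>i<n. N i (\<sigma> i)) ` {\<sigma>. \<sigma> permutes {..<n}}"
        by (rule image_eqI[where x=id]) (auto simp: permutes_id)
    qed
    moreover have "(\<Prod>i<n. N i i) = (\<Prod>i<n. max 1 (max (A i i * z1) (B i i * z2)))"
      by (rule prod.cong) (simp_all add: Ndiag)
    moreover have "charpoly2 n A B z1 z2 = tdet n N" unfolding charpoly2_def N_def by (rule refl)
    ultimately show "charpoly2 n A B z1 z2 = (\<Prod>i<n. max 1 (max (A i i * z1) (B i i * z2)))"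
      by simp
  qed
  show ?thesis
    apply (rule exI[of _ "\<lambda>i. A i i"])
    apply (rule exI[of _ "\<lambda>i. B i i"])
    using nonn main by simp
qed

end
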